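(* Let $N:\mathbb R_+\to\mathbb R_+$ be measurable and let $\mathbf P\subset\mathbb P_{[0,1]}$ be a finite convex collection of bitiles with $\operatorname{mass}(\mathbf P)>0$. Then $\mathbf P=\mathbf P_{hi}\cup\mathbf P_{lo}$ (disjoint union) where (i) $\mathbf P_{hi}$ and $\mathbf P_{lo}$ are both convex; (ii) $\operatorname{mass}(\mathbf P_{lo})\le\frac12\operatorname{mass}(\mathbf P)$; (iii) $\mathbf P_{hi}$ is a convex forest whose trees $T\in\mathcal F$ satisfy $\sum_{T\in\mathcal F}|I_T|\lesssim\operatorname{mass}(\mathbf P)^{-1}$, with an absolute implicit constant.
   Context: Notation. $\mathbb R_+=[0,\infty)$. $\mathcal D_+$ denotes the set of dyadic intervals $[2^jm,2^j(m+1))$ with $j\in\mathbb Z$, $m\in\mathbb Z_{\ge 0}$. A bitile is $P=I_P\times\omega_P$ with $I_P,\omega_P\in\mathcal D_+$ and $|I_P||\omega_P|=2$. $\mathbb P_{all}$ is the set of all bitiles, and $\mathbb P_{[0,1]}=\{P\in\mathbb P_{all}:I_P\subset[0,1]\}$. For bitiles, $P\le P'$ means $I_P\subset I_{P'}$ and $\omega_{P'}\subset\omega_P$. A collection $\mathbf P$ of bitiles is convex if $P,P''\in\mathbf P$, $P'\in\mathbb P_{all}$ and $P\le P'\le P''$ imply $P'\in\mathbf P$. A tree $T$ with top data $(I_T,\xi_T)$, where $I_T\in\mathcal D_+$ and $\xi_T\in\mathbb R_+$ is not a dyadic rational, is a collection of bitiles with $I_P\subset I_T$ and $\xi_T\in\omega_P$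 for all $P\in T$. A forest is a finite collection of bitiles which is a disjoint union of convex trees $T\in\mathcal F$ (the trees together with their top data are part of the data of the forest); it is a convex forest if moreover the whole collection is convex. Mass (relative to the fixed choice function $N$): $E(P)=I_P\cap N^{-1}(\omega_P)$ and $\operatorname{mass}(\mathbf P)=\sup_{P\in\mathbf P}|E(P)|/|I_P|$. *)

theory Defs
  imports "HOL-Analysis.Analysis"
begin

definition dyadic_int :: "real set \<Rightarrow> bool" where
  "dyadic_int I \<longleftrightarrow> (\<exists>(j::int) (m::nat). I = {2 powr j * real m ..< 2 powr j * (real m + 1)})"

definition ilen :: "real set \<Rightarrow> real" where
  "ilen I = measure lborel I"

text \<open>A bitile P = I_P x omega_P is represented as the pair (I_P, omega_P).\<close>
type_synonym bitile = "real set \<times> real set"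

definition is_bitile :: "bitile \<Rightarrow> bool" where
  "is_bitile P \<longleftrightarrow> dyadic_int (fst P) \<and> dyadic_int (snd P) \<and> ilen (fst P) * ilen (snd P) = 2"

definition bitiles01 :: "bitile set" where
  "bitiles01 = {P. is_bitile P \<and> fst P \<subseteq> {0..1}}"

definition tile_le :: "bitile \<Rightarrow> bitile \<Rightarrow> bool" where
  "tile_le P P' \<longleftrightarrow> fst P \<subseteq> fst P' \<and> snd P' \<subseteq> snd P"

definition convex_tiles :: "bitile set \<Rightarrow> bool" where
  "convex_tiles Ps \<longleftrightarrow> (\<forall>P\<in>Ps. \<forall>P''\<in>Ps. \<forall>P'. is_bitile P' \<and> tile_le P P' \<and> tile_le P' P'' \<longrightarrow> P' \<in> Ps)"

definition dyadic_rational :: "real \<Rightarrow> bool" where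
  "dyadic_rational x \<longleftrightarrow> (\<exists>(k::int) (n::nat). x = real_of_int k / 2 ^ n)"

definition is_tree :: "bitile set \<Rightarrow> real set \<Rightarrow> real \<Rightarrow> bool" where
  "is_tree T IT xi \<longleftrightarrow> dyadic_int IT \<and> xi \<ge> 0 \<and> \<not> dyadic_rational xi \<and>
     (\<forall>P\<in>T. fst P \<subseteq> IT \<and> xi \<in> snd P)"

text \<open>A forest: the finite collection Ps of bitiles is the disjoint union of the convex trees
  in the finite family F; each element of F is a triple (T, I_T, xi_T) (tree with its top data).\<close>
definition is_forest :: "bitile set \<Rightarrow> (bitile set \<times> real set \<times> real) set \<Rightarrow> bool" where
  "is_forest Ps F \<longleftrightarrow> finite Ps \<and> finite F \<and> (\<forall>P\<in>Ps. is_bitile P) \<and>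
     (\<forall>(T, IT, xi)\<in>F. is_tree T IT xi \<and> convex_tiles T) \<and>
     Ps = (\<Union>f\<in>F. fst f) \<and>
     (\<forall>f\<in>F. \<forall>g\<in>F. f \<noteq> g \<longrightarrow> fst f \<inter> fst g = {})"

definition convex_forest :: "bitile set \<Rightarrow> (bitile set \<times> real set \<times> real) set \<Rightarrow> bool" where
  "convex_forest Ps F \<longleftrightarrow> is_forest Ps F \<and> convex_tiles Ps"

definition Eset :: "(real \<Rightarrow> real) \<Rightarrow> bitile \<Rightarrow> real set" where
  "Eset N P = fst P \<inter> N -` snd P"

definition mass :: "(real \<Rightarrow> real) \<Rightarrow> bitile set \<Rightarrow> real" where
  "mass N Ps = (if Ps = {} then 0 else Sup ((\<lambda>P. measure lebesgue (Eset N P) / ilen (fst P)) ` Ps))"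

end

theory Submission imports Defs begin

lemma dyadic_form:
  assumes "dyadic_int I"
  obtains j :: int and m :: nat where "I = {2 powr j * real m ..< 2 powr j * real m + 2 powr j}" "ilen I = 2 powr j"
proof -
  obtain j :: int and m :: nat where I: "I = {2 powr j * real m ..< 2 powr j * (real m + 1)}"
    using assms unfolding dyadic_int_def by blast
  have e: "2 powr j * (real m + 1) = 2 powr j * real m + 2 powr j" by (simp add: algebra_simps)
  show ?thesis using that[of j m] I e by (simp add: ilen_def)
qed

lemma ilen_pos: "dyadic_int I \<Longrightarrow> ilen I > 0"
  by (erule dyadic_form) auto

lemma dyadic_nested_aux:
  fixes i j :: int and m n :: nat
  assumes ij: "i \<le> j"
    and x1: "2 powr i * real m \<le> x" "x < 2 powr i * real m + 2 powr i"
    and x2: "2 powr j * real n \<le> x" "x < 2 powr j * real n + 2 powr j"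
  shows "{2 powr i * real m ..< 2 powr i * real m + 2 powr i} \<subseteq> {2 powr j * real n ..< 2 powr j * real n + 2 powr j}"
proof -
  define d where "d = nat (j - i)"
  define c where "c = 2 powr i"
  have c: "c > 0" by (simp add: c_def)
  have pj: "2 powr j = c * 2 ^ d"
  proof -
    have "real_of_int j = real_of_int i + real d" using ij by (simp add: d_def)
    then have "2 powr j = 2 powr i * 2 powr (real d)" by (simp add: powr_add)
    then show ?thesis by (simp add: c_def powr_realpow)
  qed
  define y where "y = x / c"
  have y1: "real m \<le> y" "y < real m + 1" using x1 c unfolding y_def c_def[symmetric]
    by (simp_all add: field_simps)
  have y2: "2^d * real n \<le> y" "y < 2^d * real n + 2^d" using x2 c unfolding y_def pj
    by (simp_all add: field_simps)
  have "real m < 2^d * real n + 2^d" using y1 y2 by linarith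
  then have "real m < real (2^d * n + 2^d)" by simp
  then have "m < 2^d * n + 2^d" by (simp only: of_nat_less_iff)
  then have "m + 1 \<le> 2^d * n + 2^d" by simp
  then have "real (m + 1) \<le> real (2^d * n + 2^d)" by (simp only: of_nat_le_iff)
  then have a: "real m + 1 \<le> 2^d * real n + 2^d" by simp
  have "2^d * real n < real m + 1" using y1 y2 by linarith
  then have "real (2^d * n) < real (m + 1)" by simp
  then have "2^d * n < m + 1" by (simp only: of_nat_less_iff)
  then have "2^d * n \<le> m" by simp
  then have "real (2^d * n) \<le> real m" by (simp only: of_nat_le_iff)
  then have b: "2^d * real n \<le> real m" by simp
  show ?thesis unfolding c_def[symmetric] pj
  proof
    fix z assume "z \<in> {c * real m ..< c * real m + c}"
    then have "c * (2^d * real n) \<le> z \<and> z < c * (2^d * real n + 2^d)"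
    proof -
      assume z: "z \<in> {c * real m ..< c * real m + c}"
      have 1: "c*(2^d*real n) \<le> c*real m" using b c by (simp add: mult_left_mono)
      have 2: "c*(real m + 1) \<le> c*(2^d * real n + 2^d)" using a c by (simp add: mult_left_mono)
      show "c * (2^d * real n) \<le> z \<and> z < c * (2^d * real n + 2^d)" 
      proof -
        have z1: "c*real m \<le> z" "z < c*real m + c" using z by auto
        have e: "c*(real m + 1) = c*real m + c" by (simp add: algebra_simps)
        show ?thesis using 1 2 z1 e by linarith
      qed
    qed
    then show "z \<in> {c * 2 ^ d * real n ..< c * 2 ^ d * real n + c * 2 ^ d}"
      by (simp add: algebra_simps)
  qed
qed

lemma dyadic_nested:
  assumes I: "dyadic_int I" and J: "dyadic_int J" and x: "x \<in> I" "x \<in> J" and l: "ilen I \<le> ilen J"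
  shows "I \<subseteq> J"
proof -
  obtain i :: int and m :: nat where Ii: "I = {2 powr i * real m ..< 2 powr i * real m + 2 powr i}" "ilen I = 2 powr i"
    using I by (rule dyadic_form)
  obtain j :: int and n :: nat where Jj: "J = {2 powr j * real n ..< 2 powr j * real n + 2 powr j}" "ilen J = 2 powr j"
    using J by (rule dyadic_form)
  have "real_of_int i \<le> real_of_int j" using l Ii Jj by simp
  then have ij: "i \<le> j" by simp
  show ?thesis unfolding Ii(1) Jj(1)
    by (rule dyadic_nested_aux[OF ij, of m x n]) (use x Ii Jj in auto)
qed

lemma tile_le_antisym: "tile_le P Q \<Longrightarrow> tile_le Q P \<Longrightarrow> P = Q"
  unfolding tile_le_def by (metis prod_eqI subset_antisym)

lemma tile_le_trans: "tile_le P Q \<Longrightarrow> tile_le Q R \<Longrightarrow> tile_le P R"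
  unfolding tile_le_def by blast

lemma tile_le_refl: "tile_le P P"
  unfolding tile_le_def by blast

lemma comparable:
  assumes P: "is_bitile P" and Q: "is_bitile Q"
    and x: "x \<in> fst P" "x \<in> fst Q" and y: "y \<in> snd P" "y \<in> snd Q"
  shows "tile_le P Q \<or> tile_le Q P"
proof -
  have p1: "ilen (fst P) > 0" "ilen (snd P) > 0" "ilen (fst P) * ilen (snd P) = 2"
    using P by (auto simp: is_bitile_def intro: ilen_pos)
  have q1: "ilen (fst Q) > 0" "ilen (snd Q) > 0" "ilen (fst Q) * ilen (snd Q) = 2"
    using Q by (auto simp: is_bitile_def intro: ilen_pos)
  show ?thesis
  proof (cases "ilen (fst P) \<le> ilen (fst Q)")
    case True
    have "ilen (snd Q) \<le> ilen (snd P)"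
    proof (rule ccontr)
      assume "\<not> ?thesis"
      then have "ilen (fst P) * ilen (snd P) < ilen (fst Q) * ilen (snd Q)"
        using True p1 q1 by (meson less_le_trans mult_strict_left_mono not_le mult_right_mono less_imp_le)
      then show False using p1 q1 by simp
    qed
    then show ?thesis using True P Q x y unfolding tile_le_def is_bitile_def
      by (meson dyadic_nested)
  next
    case False
    have "ilen (snd P) \<le> ilen (snd Q)"
    proof (rule ccontr)
      assume "\<not> ?thesis"
      then have "ilen (fst Q) * ilen (snd Q) < ilen (fst P) * ilen (snd P)"
        using False p1 q1 by (meson less_le_trans mult_strict_left_mono not_le mult_right_mono less_imp_le)
      then show False using p1 q1 by simp
    qed
    then show ?thesis using False P Q x y unfolding tile_le_def is_bitile_def
      by (meson dyadic_nested nle_le)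
  qed
qed

lemma nondyadic_exists:
  assumes "dyadic_int I"
  shows "\<exists>xi\<in>I. xi \<ge> 0 \<and> \<not> dyadic_rational xi"
proof -
  obtain j :: int and m :: nat where Ii: "I = {2 powr j * real m ..< 2 powr j * real m + 2 powr j}"
    using assms by (rule dyadic_form)
  define a where "a = 2 powr j * real m"
  define b where "b = 2 powr j * real m + 2 powr j"
  have ab: "a < b" by (simp add: a_def b_def)
  have a0: "a \<ge> 0" by (simp add: a_def)
  have cD: "countable {x. dyadic_rational x}"
  proof (rule countable_subset)
    show "{x. dyadic_rational x} \<subseteq> (\<lambda>(k::int, n::nat). real_of_int k / 2 ^ n) ` UNIV"
      unfolding dyadic_rational_def by auto
    show "countable ((\<lambda>(k::int, n::nat). real_of_int k / 2 ^ n) ` UNIV)" by simp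
  qed
  have "uncountable {a<..<b}" using ab by (simp add: uncountable_open_interval)
  then have "\<not> {a<..<b} \<subseteq> {x. dyadic_rational x}" using cD countable_subset by blast
  then obtain xi where xi: "xi \<in> {a<..<b}" "\<not> dyadic_rational xi" by blast
  have "xi \<in> I" using xi unfolding Ii a_def b_def by auto
  then show ?thesis using a0 xi by (intro bexI[of _ xi]) auto
qed

lemma leb01: "measure lebesgue {0..1::real} = 1"
  by simp

lemma main:
  assumes fin: "finite Ps" and sub: "Ps \<subseteq> bitiles01" and cvx: "convex_tiles Ps"
    and mpos: "mass N Ps > 0"
  shows "\<exists>Phi Plo F. Ps = Phi \<union> Plo \<and> Phi \<inter> Plo = {} \<and>
       convex_tiles Phi \<and> convex_tiles Plo \<and>
       mass N Plo \<le> mass N Ps / 2 \<and>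
       convex_forest Phi F \<and>
       (\<Sum>f\<in>F. ilen (fst (snd f))) \<le> 2 / mass N Ps"
proof -
  define \<mu> where "\<mu> = mass N Ps"
  have mu: "\<mu> > 0" using mpos by (simp add: \<mu>_def)
  define dens where "dens = (\<lambda>P. measure lebesgue (Eset N P) / ilen (fst P))"
  have mass_eq: "mass N Q = (if Q = {} then 0 else Sup (dens ` Q))" for Q
    by (simp add: mass_def dens_def)
  have Pne: "Ps \<noteq> {}" using mpos by (auto simp: mass_def)
  have bit: "is_bitile P" "fst P \<subseteq> {0..1}" if "P \<in> Ps" for P
    using sub that by (auto simp: bitiles01_def)
  have upper: "dens P \<le> \<mu>" if "P \<in> Ps" for P
  proof -
    have "bdd_above (dens ` Ps)" using fin by simp
    then have "dens P \<le> Sup (dens ` Ps)" using that by (simp add: cSup_upper)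
    then show ?thesis using Pne by (simp add: \<mu>_def mass_eq)
  qed
  define dense where "dense = (\<lambda>P. dens P > \<mu> / 2)"
  define Phi where "Phi = {P\<in>Ps. \<exists>D\<in>Ps. dense D \<and> tile_le P D}"
  define Plo where "Plo = Ps - Phi"
  have split: "Ps = Phi \<union> Plo" "Phi \<inter> Plo = {}" by (auto simp: Phi_def Plo_def)
  have lo_notdense: "\<not> dense P" if "P \<in> Plo" for P
    using that tile_le_refl[of P] unfolding Plo_def Phi_def by blast
  have mlo: "mass N Plo \<le> \<mu> / 2"
  proof (cases "Plo = {}")
    case True then show ?thesis using mu by (simp add: mass_eq)
  next
    case False
    have "Sup (dens ` Plo) \<le> \<mu> / 2"
    proof (rule cSup_least)
      show "dens ` Plo \<noteq> {}" using False by simp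
      fix x assume "x \<in> dens ` Plo"
      then obtain P where "P \<in> Plo" "x = dens P" by blast
      then show "x \<le> \<mu> / 2" using lo_notdense[of P] by (simp add: dense_def not_less)
    qed
    then show ?thesis using False by (simp add: mass_eq)
  qed
  have cvx_hi: "convex_tiles Phi"
    unfolding convex_tiles_def
  proof (intro ballI allI impI)
    fix P P'' P' assume a: "P \<in> Phi" "P'' \<in> Phi" "is_bitile P' \<and> tile_le P P' \<and> tile_le P' P''"
    then have "P' \<in> Ps" using cvx unfolding convex_tiles_def Phi_def by blast
    moreover obtain D where "D \<in> Ps" "dense D" "tile_le P'' D" using a unfolding Phi_def by blast
    ultimately show "P' \<in> Phi" using a tile_le_trans unfolding Phi_def by blast
  qed
  have cvx_lo: "convex_tiles Plo"
    unfolding convex_tiles_def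
  proof (intro ballI allI impI)
    fix P P'' P' assume a: "P \<in> Plo" "P'' \<in> Plo" "is_bitile P' \<and> tile_le P P' \<and> tile_le P' P''"
    then have "P' \<in> Ps" using cvx unfolding convex_tiles_def Plo_def by blast
    moreover have "P' \<notin> Phi"
    proof
      assume "P' \<in> Phi"
      then obtain D where "D \<in> Ps" "dense D" "tile_le P' D" unfolding Phi_def by blast
      then have "P \<in> Phi" using a tile_le_trans unfolding Phi_def Plo_def by blast
      then show False using a by (auto simp: Plo_def)
    qed
    ultimately show "P' \<in> Plo" by (simp add: Plo_def)
  qed
  define Mset where "Mset = {M\<in>Ps. dense M \<and> (\<forall>M'\<in>Ps. dense M' \<and> tile_le M M' \<longrightarrow> M' = M)}"
  have finM: "finite Mset" using fin by (simp add: Mset_def)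
  have MsubPs: "Mset \<subseteq> Ps" by (auto simp: Mset_def)
  have hasmax: "\<exists>M\<in>Mset. tile_le P M" if PP: "P \<in> Phi" for P
  proof -
    obtain D where D: "D \<in> Ps" "dense D" "tile_le P D" using PP unfolding Phi_def by blast
    define S where "S = {M\<in>Ps. dense M \<and> tile_le D M}"
    define f where "f = (\<lambda>M. card {Q\<in>Ps. tile_le Q M})"
    have finS: "finite S" using fin by (simp add: S_def)
    have "D \<in> S" using D tile_le_refl by (simp add: S_def)
    then have neS: "S \<noteq> {}" by blast
    have "Max (f ` S) \<in> f ` S" using finS neS by simp
    then obtain M where M: "M \<in> S" "f M = Max (f ` S)" by auto
    have "M \<in> Mset"
      unfolding Mset_def
    proof (intro CollectI conjI ballI impI)
      show "M \<in> Ps" "dense M" using M by (auto simp: S_def)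
      fix M' assume a: "M' \<in> Ps" "dense M' \<and> tile_le M M'"
      then have "M' \<in> S" using M tile_le_trans unfolding S_def by blast
      then have le: "f M' \<le> f M" using M finS by simp
      show "M' = M"
      proof (rule ccontr)
        assume ne: "M' \<noteq> M"
        have "{Q\<in>Ps. tile_le Q M} \<subset> {Q\<in>Ps. tile_le Q M'}"
        proof
          show "{Q\<in>Ps. tile_le Q M} \<subseteq> {Q\<in>Ps. tile_le Q M'}" using a tile_le_trans by blast
          have "M' \<notin> {Q\<in>Ps. tile_le Q M}" using ne a tile_le_antisym by blast
          moreover have "M' \<in> {Q\<in>Ps. tile_le Q M'}" using a tile_le_refl by blast
          ultimately show "{Q\<in>Ps. tile_le Q M} \<noteq> {Q\<in>Ps. tile_le Q M'}" by blast
        qed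
        then have "f M < f M'" unfolding f_def by (rule psubset_card_mono[rotated]) (use fin in simp)
        then show False using le by simp
      qed
    qed
    moreover have "tile_le P M" using D M tile_le_trans unfolding S_def by blast
    ultimately show ?thesis by blast
  qed
  obtain idx :: "bitile \<Rightarrow> nat" and n where idx: "idx ` Mset = {i. i < n}" "inj_on idx Mset"
    using finite_imp_inj_to_nat_seg[OF finM] by blast
  have "\<forall>M\<in>Mset. \<exists>x\<in>snd M. x \<ge> 0 \<and> \<not> dyadic_rational x"
    using MsubPs bit(1) nondyadic_exists unfolding is_bitile_def by blast
  then obtain xi where xi: "\<And>M. M \<in> Mset \<Longrightarrow> xi M \<in> snd M \<and> xi M \<ge> 0 \<and> \<not> dyadic_rational (xi M)"
    by metis
  define T where "T = (\<lambda>M. {P\<in>Phi. tile_le P M \<and> (\<forall>M'\<in>Mset. tile_le P M' \<longrightarrow> idx M \<le> idx M')})"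
  define F where "F = (\<lambda>M. (T M, fst M, xi M)) ` Mset"
  have cover: "\<exists>M\<in>Mset. P \<in> T M" if PP: "P \<in> Phi" for P
  proof -
    define cand where "cand = {M\<in>Mset. tile_le P M}"
    have fc: "finite cand" using finM by (simp add: cand_def)
    have nc: "cand \<noteq> {}" using hasmax[OF PP] by (auto simp: cand_def)
    have "Min (idx ` cand) \<in> idx ` cand" using fc nc by simp
    then obtain M where M: "M \<in> cand" "idx M = Min (idx ` cand)" by auto
    have "\<forall>M'\<in>Mset. tile_le P M' \<longrightarrow> idx M \<le> idx M'"
      using M fc by (auto simp: cand_def)
    then show ?thesis using M PP by (auto simp: T_def cand_def)
  qed
  have disj: "T M \<inter> T M' = {}" if "M \<in> Mset" "M' \<in> Mset" "M \<noteq> M'" for M M'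
  proof -
    { fix P assume "P \<in> T M" "P \<in> T M'"
      then have a: "tile_le P M" "\<forall>M''\<in>Mset. tile_le P M'' \<longrightarrow> idx M \<le> idx M''"
        and b: "tile_le P M'" "\<forall>M''\<in>Mset. tile_le P M'' \<longrightarrow> idx M' \<le> idx M''"
        by (simp_all add: T_def)
      have "idx M \<le> idx M'" using a(2) b(1) that(2) by blast
      moreover have "idx M' \<le> idx M" using b(2) a(1) that(1) by blast
      ultimately have "idx M = idx M'" by simp
      then have "M = M'" using inj_onD[OF idx(2)] that by blast
      then have False using that by blast }
    then show ?thesis by blast
  qed
  have cvxT: "convex_tiles (T M)" if "M \<in> Mset" for M
    unfolding convex_tiles_def
  proof (intro ballI allI impI)
    fix P P'' P' assume a: "P \<in> T M" "P'' \<in> T M" "is_bitile P' \<and> tile_le P P' \<and> tile_le P' P''"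
    have "P' \<in> Phi" using cvx_hi a unfolding convex_tiles_def T_def by blast
    moreover have "tile_le P' M" using a tile_le_trans unfolding T_def by blast
    moreover have "\<forall>M'\<in>Mset. tile_le P' M' \<longrightarrow> idx M \<le> idx M'"
      using a tile_le_trans unfolding T_def by blast
    ultimately show "P' \<in> T M" by (simp add: T_def)
  qed
  have treeT: "is_tree (T M) (fst M) (xi M)" if "M \<in> Mset" for M
    unfolding is_tree_def
  proof (intro conjI ballI)
    show "dyadic_int (fst M)" using that MsubPs bit(1)[of M] unfolding is_bitile_def by blast
    show "xi M \<ge> 0" "\<not> dyadic_rational (xi M)" using xi[OF that] by auto
    fix P assume "P \<in> T M"
    then have "tile_le P M" by (simp add: T_def)
    then show "fst P \<subseteq> fst M" "xi M \<in> snd P" using xi[OF that] unfolding tile_le_def by auto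
  qed
  have TsubPhi: "T M \<subseteq> Phi" for M by (auto simp: T_def)
  have forest: "convex_forest Phi F"
    unfolding convex_forest_def is_forest_def
  proof (intro conjI)
    show "finite Phi" using fin by (simp add: Phi_def)
    show "finite F" using finM by (simp add: F_def)
    show "\<forall>P\<in>Phi. is_bitile P" using bit by (simp add: Phi_def)
    show "\<forall>(T', IT, x)\<in>F. is_tree T' IT x \<and> convex_tiles T'"
      using treeT cvxT by (auto simp: F_def)
    have U: "(\<Union>f\<in>F. fst f) = (\<Union>M\<in>Mset. T M)" by (simp add: F_def)
    show "Phi = (\<Union>f\<in>F. fst f)" unfolding U
    proof
      show "Phi \<subseteq> (\<Union>M\<in>Mset. T M)" using cover by blast
      show "(\<Union>M\<in>Mset. T M) \<subseteq> Phi" using TsubPhi by blast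
    qed
    show "\<forall>f\<in>F. \<forall>g\<in>F. f \<noteq> g \<longrightarrow> fst f \<inter> fst g = {}"
    proof (intro ballI impI)
      fix f g assume "f \<in> F" "g \<in> F" "f \<noteq> g"
      then obtain M M' where "M \<in> Mset" "M' \<in> Mset" "f = (T M, fst M, xi M)" "g = (T M', fst M', xi M')"
        unfolding F_def by blast
      then show "fst f \<inter> fst g = {}" using disj \<open>f \<noteq> g\<close> by fastforce
    qed
    show "convex_tiles Phi" by (rule cvx_hi)
  qed
  have sum1: "(\<Sum>f\<in>F. ilen (fst (snd f))) \<le> (\<Sum>M\<in>Mset. ilen (fst M))"
  proof -
    have "(\<Sum>f\<in>F. ilen (fst (snd f))) \<le> sum ((\<lambda>f. ilen (fst (snd f))) \<circ> (\<lambda>M. (T M, fst M, xi M))) Mset"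
      unfolding F_def by (rule sum_image_le[OF finM]) (simp add: ilen_def)
    then show ?thesis by (simp add: o_def)
  qed
  define E where "E = (\<lambda>M. Eset N M)"
  have Epos: "ilen (fst M) \<le> (2 / \<mu>) * measure lebesgue (E M)" "measure lebesgue (E M) > 0"
    if "M \<in> Mset" for M
  proof -
    have il: "ilen (fst M) > 0" using that MsubPs bit(1)[of M] ilen_pos unfolding is_bitile_def by blast
    have "dense M" using that unfolding Mset_def by blast
    then have "\<mu> / 2 < measure lebesgue (E M) / ilen (fst M)"
      unfolding dense_def dens_def E_def by simp
    then have a: "\<mu> / 2 * ilen (fst M) < measure lebesgue (E M)" using il by (simp add: less_divide_eq)
    have "0 < \<mu> / 2 * ilen (fst M)" using mu il by simp
    then show "measure lebesgue (E M) > 0" using a by linarith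
    have "ilen (fst M) = (2 / \<mu>) * (\<mu> / 2 * ilen (fst M))" using mu by simp
    also have "\<dots> \<le> (2 / \<mu>) * measure lebesgue (E M)" using a mu by (intro mult_left_mono) auto
    finally show "ilen (fst M) \<le> (2 / \<mu>) * measure lebesgue (E M)" .
  qed
  have Esub: "E M \<subseteq> {0..1}" if "M \<in> Mset" for M
    using that MsubPs bit(2)[of M] unfolding E_def Eset_def by blast
  have Emeas: "E M \<in> sets lebesgue" if "M \<in> Mset" for M
    using Epos(2)[OF that] measure_notin_sets by (metis less_irrefl)
  have Efin: "E M \<in> fmeasurable lebesgue" if "M \<in> Mset" for M
    by (rule fmeasurableI2[of "{0..1}"]) (use Esub[OF that] Emeas[OF that] in auto)
  have Edisj: "disjoint_family_on E Mset"
    unfolding disjoint_family_on_def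
  proof (intro ballI impI)
    fix M M' assume a: "M \<in> Mset" "M' \<in> Mset" "M \<noteq> M'"
    show "E M \<inter> E M' = {}"
    proof (rule ccontr)
      assume "E M \<inter> E M' \<noteq> {}"
      then obtain x where x: "x \<in> fst M" "x \<in> fst M'" "N x \<in> snd M" "N x \<in> snd M'"
        by (auto simp: E_def Eset_def)
      have "tile_le M M' \<or> tile_le M' M"
        by (rule comparable[OF _ _ x]) (use a MsubPs bit(1) in blast)+
      then show False using a unfolding Mset_def by blast
    qed
  qed
  have EM: "E ` Mset \<subseteq> sets lebesgue" using Emeas by blast
  have Einf: "emeasure lebesgue (E M) \<noteq> \<infinity>" if "M \<in> Mset" for M
    using fmeasurableD2[OF Efin[OF that]] by simp
  have "(\<Sum>M\<in>Mset. measure lebesgue (E M)) = measure lebesgue (\<Union>M\<in>Mset. E M)"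
    by (rule measure_finite_Union[symmetric, OF finM EM Edisj Einf])
  also have "\<dots> \<le> measure lebesgue {0..1::real}"
  proof (rule measure_mono_fmeasurable)
    show "(\<Union>M\<in>Mset. E M) \<subseteq> {0..1}" using Esub by blast
    show "(\<Union>M\<in>Mset. E M) \<in> sets lebesgue" using Emeas finM by blast
    show "{0..1::real} \<in> fmeasurable lebesgue" by simp
  qed
  also have "\<dots> = 1" by simp
  finally have sumE: "(\<Sum>M\<in>Mset. measure lebesgue (E M)) \<le> 1" .
  have "(\<Sum>M\<in>Mset. ilen (fst M)) \<le> (\<Sum>M\<in>Mset. (2 / \<mu>) * measure lebesgue (E M))"
    by (rule sum_mono) (rule Epos(1))
  also have "\<dots> = (2 / \<mu>) * (\<Sum>M\<in>Mset. measure lebesgue (E M))"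
    by (simp add: sum_distrib_left)
  also have "\<dots> \<le> 2 / \<mu>" using mult_left_mono[OF sumE, of "2 / \<mu>"] mu by simp
  finally have sum2: "(\<Sum>M\<in>Mset. ilen (fst M)) \<le> 2 / \<mu>" .
  show ?thesis
    using split cvx_hi cvx_lo mlo forest sum1 sum2 unfolding \<mu>_def[symmetric]
    by (intro exI[of _ Phi] exI[of _ Plo] exI[of _ F] conjI) (assumption | rule order.trans[OF sum1 sum2])+
qed

theorem lemma5p1:
  shows "\<exists>C>0. \<forall>(N :: real \<Rightarrow> real) (Ps :: bitile set).
    N \<in> borel_measurable (lebesgue_on {0..}) \<and> (\<forall>x\<ge>0. N x \<ge> 0) \<and>
    finite Ps \<and> Ps \<subseteq> bitiles01 \<and> convex_tiles Ps \<and> mass N Ps > 0 \<longrightarrow>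
    (\<exists>Phi Plo F. Ps = Phi \<union> Plo \<and> Phi \<inter> Plo = {} \<and>
       convex_tiles Phi \<and> convex_tiles Plo \<and>
       mass N Plo \<le> mass N Ps / 2 \<and>
       convex_forest Phi F \<and>
       (\<Sum>f\<in>F. ilen (fst (snd f))) \<le> C / mass N Ps)"
proof (rule exI[of _ "2::real"], intro conjI allI impI)
  show "(0::real) < 2" by simp
  fix N :: "real \<Rightarrow> real" and Ps :: "bitile set"
  assume h: "N \<in> borel_measurable (lebesgue_on {0..}) \<and> (\<forall>x\<ge>0. N x \<ge> 0) \<and>
    finite Ps \<and> Ps \<subseteq> bitiles01 \<and> convex_tiles Ps \<and> mass N Ps > 0"
  then have "finite Ps" "Ps \<subseteq> bitiles01" "convex_tiles Ps" "mass N Ps > 0" by simp_all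
  then show "\<exists>Phi Plo F. Ps = Phi \<union> Plo \<and> Phi \<inter> Plo = {} \<and>
       convex_tiles Phi \<and> convex_tiles Plo \<and>
       mass N Plo \<le> mass N Ps / 2 \<and>
       convex_forest Phi F \<and>
       (\<Sum>f\<in>F. ilen (fst (snd f))) \<le> 2 / mass N Ps" by (rule main)
qed

end
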